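(* Let $\{H(\theta)\}_{\theta\in[0,s]}$ be a differentiable family of self-adjoint operators on a finite-dimensional Hilbert space such that each $H(\theta)$ has a unique ground state and spectral gap $\Delta(\theta)\ge\Delta>0$. Let $\Psi_0(\theta)$ be the differentiable family of normalized ground states satisfying the parallel transport condition $\langle\Psi_0(\theta)|\partial_\theta\Psi_0(\theta)\rangle=0$. Let $U_\Delta(\theta)$ solve $\partial_\theta U_\Delta(\theta)=i\,\mathcal S_\Delta(H(\theta),\partial_\theta H(\theta))\,U_\Delta(\theta)$, $U_\Delta(0)=\mathbb 1$. Then $\Psi_0(\theta)=U_\Delta(\theta)\Psi_0(0)$ for all $\theta\in[0,s]$.
   Context: Filter function: for $\Delta>0$, $W_\Delta:\mathbb R\to\mathbb R$ is a fixed function, continuous except at $t=0$ (where it is right-continuous with $W_\Delta(0)=1/2=\|W_\Delta\|_\infty$), odd away from $t=0$, with $\|W_\Delta\|_1\le K/\Delta$ for a constant $K$, decaying like $\exp(-c_0\Delta|t|/\ln^2(\Delta|t|))$, and whose Fourier transform $\hat W_\Delta(\lambda)=\int_{\mathbb R}W_\Delta(t)e^{i\lambda t}dt$ equals $i/\lambda$ for all $|\lambda|\ge\Delta$. For self-adjoint $H$ and an operator $A$, $\mathcal S_\Delta(H,A)=\int_{\mathbb R}W_\Delta(t)\,e^{itH}Ae^{-itH}\,dt$. *)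

theory Defs
  imports "HOL-Analysis.Analysis"
begin

definition cinner :: "complex ^ 'n \<Rightarrow> complex ^ 'n \<Rightarrow> complex" where
  "cinner x y = (\<Sum>i\<in>UNIV. cnj (x $ i) * y $ i)"

definition cnorm :: "complex ^ 'n \<Rightarrow> real" where
  "cnorm x = sqrt (Re (cinner x x))"

definition adjoint_mat :: "complex ^ 'n ^ 'n \<Rightarrow> complex ^ 'n ^ 'n" where
  "adjoint_mat A = (\<chi> i j. cnj (A $ j $ i))"

definition self_adjoint :: "complex ^ 'n ^ 'n \<Rightarrow> bool" where
  "self_adjoint A \<longleftrightarrow> adjoint_mat A = A"

definition cscale_mat :: "complex \<Rightarrow> complex ^ 'n ^ 'n \<Rightarrow> complex ^ 'n ^ 'n" where
  "cscale_mat c A = (\<chi> i j. c * A $ i $ j)"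

primrec mat_pow :: "complex ^ 'n ^ 'n \<Rightarrow> nat \<Rightarrow> complex ^ 'n ^ 'n" where
  "mat_pow A 0 = mat 1"
| "mat_pow A (Suc k) = A ** mat_pow A k"

definition mat_exp :: "complex ^ 'n ^ 'n \<Rightarrow> complex ^ 'n ^ 'n" where
  "mat_exp A = (\<Sum>k. (1 / fact k) *\<^sub>R mat_pow A k)"

definition is_eigenvalue :: "complex ^ 'n ^ 'n \<Rightarrow> complex \<Rightarrow> bool" where
  "is_eigenvalue H \<mu> \<longleftrightarrow> (\<exists>v. v \<noteq> 0 \<and> H *v v = \<mu> *s v)"

definition unique_ground_state_gap :: "complex ^ 'n ^ 'n \<Rightarrow> real \<Rightarrow> real \<Rightarrow> bool" where
  "unique_ground_state_gap H E0 \<Delta> \<longleftrightarrow>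
     is_eigenvalue H (complex_of_real E0) \<and>
     (\<exists>\<psi>. \<forall>v. H *v v = complex_of_real E0 *s v \<longrightarrow> (\<exists>c. v = c *s \<psi>)) \<and>
     (\<forall>\<mu>. is_eigenvalue H \<mu> \<longrightarrow> \<mu> \<noteq> complex_of_real E0 \<longrightarrow>
          \<mu> \<in> \<real> \<and> E0 + \<Delta> \<le> Re \<mu>)"

definition normalized_ground_state :: "complex ^ 'n ^ 'n \<Rightarrow> complex ^ 'n \<Rightarrow> bool" where
  "normalized_ground_state H \<psi> \<longleftrightarrow> cnorm \<psi> = 1 \<and>
     (\<exists>E0::real. H *v \<psi> = complex_of_real E0 *s \<psi> \<and>
        (\<forall>\<mu>. is_eigenvalue H \<mu> \<longrightarrow> \<mu> \<in> \<real> \<and> E0 \<le> Re \<mu>))"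

definition filter_function :: "real \<Rightarrow> real \<Rightarrow> real \<Rightarrow> (real \<Rightarrow> real) \<Rightarrow> bool" where
  "filter_function K c0 \<Delta> W \<longleftrightarrow>
     (\<forall>t. t \<noteq> 0 \<longrightarrow> isCont W t) \<and>
     continuous (at_right 0) W \<and>
     W 0 = 1/2 \<and> (\<forall>t. \<bar>W t\<bar> \<le> 1/2) \<and>
     (\<forall>t. t \<noteq> 0 \<longrightarrow> W (- t) = - W t) \<and>
     integrable lborel W \<and> (\<integral>t. \<bar>W t\<bar> \<partial>lborel) \<le> K / \<Delta> \<and>
     c0 > 0 \<and>
     (\<exists>C. \<forall>t. \<Delta> * \<bar>t\<bar> \<ge> 2 \<longrightarrow>
          \<bar>W t\<bar> \<le> C * exp (- c0 * \<Delta> * \<bar>t\<bar> / (ln (\<Delta> * \<bar>t\<bar>))\<^sup>2)) \<and>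
     (\<forall>\<mu>. \<bar>\<mu>\<bar> \<ge> \<Delta> \<longrightarrow>
          (\<integral>t. complex_of_real (W t) * exp (\<i> * complex_of_real (\<mu> * t)) \<partial>lborel)
            = \<i> / complex_of_real \<mu>)"

definition S_filter :: "(real \<Rightarrow> real) \<Rightarrow> complex ^ 'n ^ 'n \<Rightarrow> complex ^ 'n ^ 'n \<Rightarrow> complex ^ 'n ^ 'n" where
  "S_filter W H A = (\<integral>t. W t *\<^sub>R
      (mat_exp (cscale_mat (\<i> * complex_of_real t) H) ** A **
       mat_exp (cscale_mat (- \<i> * complex_of_real t) H)) \<partial>lborel)"

end

theory Submission
  imports Defs
begin

lemma cscaleR: "(r::real) *\<^sub>R (z::complex) = of_real r * z" by (simp add: scaleR_conv_of_real)

lemma cinner_add_right: "cinner x (y + z) = cinner x y + cinner x z"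
  by (simp add: cinner_def sum.distrib algebra_simps)
lemma cinner_add_left: "cinner (x + y) z = cinner x z + cinner y z"
  by (simp add: cinner_def sum.distrib algebra_simps)
lemma cinner_diff_right: "cinner x (y - z) = cinner x y - cinner x z"
  by (simp add: cinner_def sum_subtractf algebra_simps)
lemma cinner_diff_left: "cinner (x - y) z = cinner x z - cinner y z"
  by (simp add: cinner_def sum_subtractf algebra_simps)
lemma cinner_scaleR_right: "cinner x (r *\<^sub>R y) = of_real r * cinner x y"
  unfolding cinner_def sum_distrib_left by (rule sum.cong) (simp_all add: vector_scaleR_component cscaleR)
lemma cinner_scaleR_left: "cinner (r *\<^sub>R x) y = of_real r * cinner x y"
  unfolding cinner_def sum_distrib_left by (rule sum.cong) (simp_all add: vector_scaleR_component cscaleR)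
lemma cinner_cscale_right: "cinner x (c *s y) = c * cinner x y"
  by (simp add: cinner_def sum_distrib_left algebra_simps)
lemma cinner_cscale_left: "cinner (c *s x) y = cnj c * cinner x y"
  by (simp add: cinner_def sum_distrib_left algebra_simps)
lemma cinner_zero_right[simp]: "cinner x 0 = 0" by (simp add: cinner_def)
lemma cinner_zero_left[simp]: "cinner 0 x = 0" by (simp add: cinner_def)
lemma cinner_cnj: "cnj (cinner x y) = cinner y x"
  by (simp add: cinner_def mult.commute)
lemma inner_cinner: "x \<bullet> y = Re (cinner x y)"
  by (simp add: cinner_def inner_vec_def Re_sum inner_complex_def)
  
lemma cinner_self: "cinner x x = of_real ((norm x)^2)"
proof -
  have "cinner x x = (\<Sum>i\<in>UNIV. of_real ((cmod (x$i))^2))"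
    unfolding cinner_def by (rule sum.cong) (auto simp: complex_norm_square[symmetric] mult.commute)
  also have "\<dots> = of_real ((norm x)^2)"
    by (simp add: norm_vec_def L2_set_def sum_nonneg)
  finally show ?thesis .
qed

lemma cnorm_norm: "cnorm x = norm x"
  by (simp add: cnorm_def cinner_self)

lemma cinner_mat_right: "cinner x (A *v y) = cinner (adjoint_mat A *v x) y"
  by (simp add: cinner_def matrix_vector_mult_def adjoint_mat_def sum_distrib_left sum_distrib_right
      algebra_simps) (rule sum.swap)

lemma herm: "self_adjoint H \<Longrightarrow> cinner x (H *v y) = cinner (H *v x) y"
  by (simp add: cinner_mat_right self_adjoint_def)

lemma lin_mv_left: "linear (\<lambda>A::complex^'n^'m. A *v v)"
  by (rule linearI) (auto simp: vec_eq_iff matrix_vector_mult_def sum.distrib algebra_simps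
      vector_scaleR_component cscaleR sum_distrib_left)
lemma lin_mv_right: "linear (\<lambda>v::complex^'n. (A::complex^'n^'m) *v v)"
  by (rule linearI) (auto simp: vec_eq_iff matrix_vector_mult_def sum.distrib algebra_simps
      vector_scaleR_component cscaleR sum_distrib_left)
lemma bl_mv_left: "bounded_linear (\<lambda>A::complex^'n^'m. A *v v)"
  using lin_mv_left linear_conv_bounded_linear by blast
lemma bl_mv_right: "bounded_linear (\<lambda>v::complex^'n. (A::complex^'n^'m) *v v)"
  using lin_mv_right linear_conv_bounded_linear by blast
lemma bbl_mv: "bounded_bilinear (\<lambda>(A::complex^'n^'m) (v::complex^'n). A *v v)"
  unfolding bilinear_conv_bounded_bilinear[symmetric] bilinear_def
  using lin_mv_left lin_mv_right by blast

lemma lin_mm_left: "linear (\<lambda>A::complex^'n^'m. A ** (B::complex^'k^'n))"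
  by (rule linearI) (auto simp: vec_eq_iff matrix_matrix_mult_def sum.distrib algebra_simps
      vector_scaleR_component cscaleR sum_distrib_left)
lemma lin_mm_right: "linear (\<lambda>B::complex^'k^'n. (A::complex^'n^'m) ** B)"
  by (rule linearI) (auto simp: vec_eq_iff matrix_matrix_mult_def sum.distrib algebra_simps
      vector_scaleR_component cscaleR sum_distrib_left)
lemma bbl_mm: "bounded_bilinear (\<lambda>(A::complex^'n^'m) (B::complex^'k^'n). A ** B)"
  unfolding bilinear_conv_bounded_bilinear[symmetric] bilinear_def
  using lin_mm_left lin_mm_right by blast

lemma lin_cs_left: "linear (\<lambda>c::complex. c *s (v::complex^'n))"
  by (rule linearI) (auto simp: vec_eq_iff algebra_simps vector_scaleR_component cscaleR)
lemma lin_cs_right: "linear (\<lambda>v::complex^'n. c *s v)"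
  by (rule linearI) (auto simp: vec_eq_iff algebra_simps vector_scaleR_component cscaleR)
lemma bl_cs_left: "bounded_linear (\<lambda>c::complex. c *s (v::complex^'n))"
  using lin_cs_left linear_conv_bounded_linear by blast
lemma bl_cs_right: "bounded_linear (\<lambda>v::complex^'n. c *s v)"
  using lin_cs_right linear_conv_bounded_linear by blast
lemma bbl_cs: "bounded_bilinear (\<lambda>(c::complex) (v::complex^'n). c *s v)"
  unfolding bilinear_conv_bounded_bilinear[symmetric] bilinear_def
  using lin_cs_left lin_cs_right by blast

lemma lin_ci_left: "linear (\<lambda>x. cinner x y)"
  by (rule linearI) (auto simp: cinner_add_left cinner_scaleR_left cscaleR)
lemma lin_ci_right: "linear (\<lambda>y. cinner x y)"
  by (rule linearI) (auto simp: cinner_add_right cinner_scaleR_right cscaleR)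
lemma bl_ci_right: "bounded_linear (\<lambda>y. cinner x y)"
  using lin_ci_right linear_conv_bounded_linear by blast
lemma bbl_ci: "bounded_bilinear cinner"
  unfolding bilinear_conv_bounded_bilinear[symmetric] bilinear_def
  using lin_ci_left lin_ci_right by blast

lemma lin_adj: "linear adjoint_mat"
  by (rule linearI) (auto simp: vec_eq_iff adjoint_mat_def vector_scaleR_component cscaleR)
lemma bl_adj: "bounded_linear adjoint_mat"
  using lin_adj linear_conv_bounded_linear by blast

definition colmat :: "'n \<Rightarrow> complex^'m \<Rightarrow> complex^'n^'m" where
  "colmat j x = (\<chi> i k. if k = j then x $ i else 0)"
lemma bl_colmat: "bounded_linear (colmat j)"
  unfolding linear_conv_bounded_linear[symmetric]
  by (rule linearI) (auto simp: vec_eq_iff colmat_def vector_scaleR_component)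

lemma mv_axis: "((A::complex^'n^'m) *v axis j 1) $ i = A $ i $ j"
  by (simp add: matrix_vector_mult_def axis_def if_distrib cong: if_cong)

lemma mat_colmat: "(A::complex^'n^'m) = (\<Sum>j\<in>UNIV. colmat j (A *v axis j 1))"
  by (simp add: vec_eq_iff colmat_def mv_axis sum_component
     if_distrib cong: if_cong)

lemma mv_cs: "(A::complex^'n^'m) *v (c *s v) = c *s (A *v v)"
  by (simp add: vec_eq_iff matrix_vector_mult_def sum_distrib_left algebra_simps)

lemma cscale_mv: "cscale_mat c H *v v = c *s (H *v v)"
  by (simp add: vec_eq_iff matrix_vector_mult_def sum_distrib_left cscale_mat_def algebra_simps)

lemma mat_pow_eig:
  assumes "(X::complex^'n^'n) *v v = c *s v"
  shows "mat_pow X k *v v = c ^ k *s v"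
proof (induction k)
  case 0 then show ?case by (simp add: matrix_vector_mul_lid)
next
  case (Suc k)
  have "mat_pow X (Suc k) *v v = X *v (mat_pow X k *v v)"
    by (simp add: matrix_vector_mul_assoc)
  also have "\<dots> = c ^ Suc k *s v" using Suc assms by (simp add: mv_cs)
  finally show ?case .
qed

lemma mat_pow_bound:
  fixes X :: "complex^'n^'n"
  assumes K: "\<And>(A::complex^'n^'n) (B::complex^'n^'n). norm (A ** B) \<le> norm A * norm B * K" and "K > 0"
  shows "norm (mat_pow X k) \<le> norm (mat 1 :: complex^'n^'n) * (K * norm X) ^ k"
proof (induction k)
  case 0 then show ?case by simp
next
  case (Suc k)
  have "norm (mat_pow X (Suc k)) \<le> norm X * norm (mat_pow X k) * K" using K[where A=X and B="mat_pow X k"] by simp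
  also have "\<dots> \<le> norm X * (norm (mat 1 :: complex^'n^'n) * (K * norm X) ^ k) * K"
    using Suc \<open>K>0\<close> by (intro mult_right_mono mult_left_mono) auto
  also have "\<dots> = norm (mat 1 :: complex^'n^'n) * (K * norm X) ^ Suc k" by (simp add: algebra_simps)
  finally show ?case .
qed

lemma mat_exp_summable: "summable (\<lambda>k. (1 / fact k) *\<^sub>R mat_pow (X::complex^'n^'n) k)"
proof -
  obtain K where K: "\<And>(A::complex^'n^'n) (B::complex^'n^'n). norm (A ** B) \<le> norm A * norm B * K" and "K > 0"
    using bounded_bilinear.pos_bounded[OF bbl_mm] by blast
  let ?c = "norm (mat 1 :: complex^'n^'n)"
  show ?thesis
  proof (rule summable_comparison_test)
    show "summable (\<lambda>k. ?c * (inverse (fact k) * (K * norm X) ^ k))"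
      by (intro summable_mult summable_exp)
    show "\<exists>N. \<forall>n\<ge>N. norm ((1 / fact n) *\<^sub>R mat_pow X n) \<le> ?c * (inverse (fact n) * (K * norm X) ^ n)"
    proof (intro exI allI impI)
      fix n :: nat
      have "norm ((1 / fact n) *\<^sub>R mat_pow X n) = inverse (fact n) * norm (mat_pow X n)"
        by (simp add: divide_inverse)
      also have "\<dots> \<le> inverse (fact n) * (?c * (K * norm X) ^ n)"
        using mat_pow_bound[OF K \<open>K>0\<close>] by (intro mult_left_mono) auto
      finally show "norm ((1 / fact n) *\<^sub>R mat_pow X n) \<le> ?c * (inverse (fact n) * (K * norm X) ^ n)"
        by (simp add: algebra_simps)
    qed
  qed
qed

lemma mat_exp_eig:
  assumes "(X::complex^'n^'n) *v v = c *s v"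
  shows "mat_exp X *v v = exp c *s v"
proof -
  have "mat_exp X *v v = (\<Sum>k. ((1 / fact k) *\<^sub>R mat_pow X k) *v v)"
    unfolding mat_exp_def by (rule bounded_linear.suminf[OF bl_mv_left mat_exp_summable])
  also have "\<dots> = (\<Sum>k. (c ^ k /\<^sub>R fact k) *s v)"
  proof (rule suminf_cong)
    fix k
    have "((1 / fact k) *\<^sub>R mat_pow X k) *v v = (1 / fact k) *\<^sub>R (mat_pow X k *v v)"
      using linear_scale[OF lin_mv_left] by blast
    also have "\<dots> = (c ^ k /\<^sub>R fact k) *s v"
      by (simp add: mat_pow_eig[OF assms] vec_eq_iff vector_scaleR_component cscaleR divide_inverse)
    finally show "((1 / fact k) *\<^sub>R mat_pow X k) *v v = (c ^ k /\<^sub>R fact k) *s v" .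
  qed
  also have "\<dots> = (\<Sum>k. c ^ k /\<^sub>R fact k) *s v"
    by (rule bounded_linear.suminf[OF bl_cs_left summable_exp_generic, symmetric])
  also have "\<dots> = exp c *s v" by (simp add: exp_def)
  finally show ?thesis .
qed

lemma exp_eig:
  assumes "H *v v = complex_of_real \<mu> *s v"
  shows "mat_exp (cscale_mat c H) *v v = exp (c * complex_of_real \<mu>) *s v"
  by (rule mat_exp_eig) (simp add: cscale_mv assms vec_eq_iff)

definition Eig :: "complex^'n^'n \<Rightarrow> (complex^'n) set" where
  "Eig H = {v. \<exists>\<mu>::real. H *v v = complex_of_real \<mu> *s v}"

lemma herm_inner: "self_adjoint H \<Longrightarrow> a \<bullet> (H *v b) = (H *v a) \<bullet> b"
  by (simp add: inner_cinner herm)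

lemma ofreal_cs: "complex_of_real r *s v = r *\<^sub>R v"
  by (simp add: vec_eq_iff vector_scaleR_component cscaleR)

lemma quad_zero:
  fixes a b :: real
  assumes "\<forall>t. a * t + b * t^2 \<ge> 0"
  shows "a = 0"
proof (rule ccontr)
  assume "a \<noteq> 0"
  define t where "t = - a / (2 * (\<bar>b\<bar> + 1))"
  have d: "\<bar>b\<bar> + 1 > 0" by simp
  have "a * t + b * t^2 = t * (a + b * t)" by (simp add: power2_eq_square algebra_simps)
  moreover have "t * (a + b * t) < 0"
  proof -
    have "\<bar>b * t\<bar> \<le> \<bar>a\<bar> / 2"
    proof -
      have "\<bar>b * t\<bar> = \<bar>b\<bar> * \<bar>a\<bar> / (2 * (\<bar>b\<bar> + 1))" using d
        by (simp add: t_def abs_mult abs_divide)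
      also have "\<dots> \<le> (\<bar>b\<bar> + 1) * \<bar>a\<bar> / (2 * (\<bar>b\<bar> + 1))" using d
        by (intro divide_right_mono mult_right_mono) auto
      also have "\<dots> = \<bar>a\<bar> / 2" using d by (simp add: divide_simps)
      finally show ?thesis .
    qed
    show ?thesis
    proof (cases "a > 0")
      case True
      have "t < 0" unfolding t_def using True d by (simp add: divide_neg_pos)
      moreover have "a + b * t > 0" using \<open>\<bar>b * t\<bar> \<le> \<bar>a\<bar> / 2\<close> True by linarith
      ultimately show ?thesis by (simp add: mult_neg_pos)
    next
      case False
      then have "a < 0" using \<open>a \<noteq> 0\<close> by linarith
      have "t > 0" unfolding t_def using \<open>a < 0\<close> d by (intro divide_pos_pos) auto
      moreover have "a + b * t < 0" using \<open>\<bar>b * t\<bar> \<le> \<bar>a\<bar> / 2\<close> \<open>a < 0\<close> by linarith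
      ultimately show ?thesis by (simp add: mult_pos_neg)
    qed
  qed
  moreover have "0 \<le> a * t + b * t^2" using assms by blast
  ultimately show False by linarith
qed

lemma eig_exists:
  fixes H :: "complex^'n^'n"
  assumes sa: "self_adjoint H" and V: "subspace V" and inv: "\<And>v. v \<in> V \<Longrightarrow> H *v v \<in> V"
    and nz: "x \<in> V" "x \<noteq> 0"
  shows "\<exists>u\<in>V. u \<noteq> 0 \<and> u \<in> Eig H"
proof -
  define f where "f v = v \<bullet> (H *v v)" for v
  define S where "S = V \<inter> sphere 0 1"
  have "compact S" unfolding S_def
    by (rule closed_Int_compact[OF closed_subspace[OF V] compact_sphere])
  have xS: "(1 / norm x) *\<^sub>R x \<in> S" using nz V by (auto simp: S_def subspace_scale)
  have "continuous_on S f" unfolding f_def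
    by (intro continuous_intros linear_continuous_on bl_mv_right)
  then obtain u where uS: "u \<in> S" and umin: "\<And>y. y \<in> S \<Longrightarrow> f u \<le> f y"
    using continuous_attains_inf[OF \<open>compact S\<close>, of f] xS by blast
  define m where "m = f u"
  have uV: "u \<in> V" and nu: "norm u = 1" using uS by (auto simp: S_def)
  have hr: "\<And>a b. a \<bullet> (H *v b) = (H *v a) \<bullet> b" using herm_inner[OF sa] by blast
  have Hlin: "H *v (a + r *\<^sub>R b) = H *v a + r *\<^sub>R (H *v b)" for a b r
    using linear_add[OF lin_mv_right] linear_scale[OF lin_mv_right] by metis
  have ge: "f y \<ge> m * (y \<bullet> y)" if "y \<in> V" for y
  proof (cases "y = 0")
    case True then show ?thesis by (simp add: f_def)
  next
    case False
    have "(1 / norm y) *\<^sub>R y \<in> S" using False that V by (auto simp: S_def subspace_scale)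
    then have "m \<le> f ((1 / norm y) *\<^sub>R y)" using umin m_def by auto
    also have "\<dots> = f y / (norm y)^2"
      by (simp add: f_def linear_scale[OF lin_mv_right] power2_eq_square)
    finally show ?thesis using False by (simp add: field_simps power2_norm_eq_inner)
  qed
  define Bu where "Bu = H *v u - m *\<^sub>R u"
  have BuV: "Bu \<in> V" unfolding Bu_def using uV inv V by (intro subspace_diff subspace_scale) auto
  have a0: "w \<bullet> Bu = 0" if "w \<in> V" for w
  proof -
    have "\<forall>t. (2 * (w \<bullet> Bu)) * t + (f w - m * (w \<bullet> w)) * t^2 \<ge> 0"
    proof
      fix t :: real
      have "u + t *\<^sub>R w \<in> V" using uV that V by (intro subspace_add subspace_scale) auto
      then have "f (u + t *\<^sub>R w) - m * ((u + t *\<^sub>R w) \<bullet> (u + t *\<^sub>R w)) \<ge> 0" using ge by auto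
      moreover have "f (u + t *\<^sub>R w) - m * ((u + t *\<^sub>R w) \<bullet> (u + t *\<^sub>R w))
          = (f u - m * (u \<bullet> u)) + (2 * (w \<bullet> Bu)) * t + (f w - m * (w \<bullet> w)) * t^2"
      proof -
        have hu: "u \<bullet> (H *v w) = w \<bullet> (H *v u)" using hr[of u w] by (simp add: inner_commute)
        have uw: "u \<bullet> w = w \<bullet> u" by (rule inner_commute)
        have e1: "(u + t *\<^sub>R w) \<bullet> (H *v (u + t *\<^sub>R w)) = u \<bullet> (H *v u) + 2 * t * (w \<bullet> (H *v u)) + t^2 * (w \<bullet> (H *v w))"
          unfolding Hlin by (simp add: inner_add_left inner_add_right hu power2_eq_square ring_distribs) 
        have e2: "(u + t *\<^sub>R w) \<bullet> (u + t *\<^sub>R w) = u \<bullet> u + 2 * t * (w \<bullet> u) + t^2 * (w \<bullet> w)"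
          by (simp add: inner_add_left inner_add_right uw power2_eq_square ring_distribs)
        show ?thesis unfolding f_def e1 e2 Bu_def by (simp add: inner_diff_right power2_eq_square ring_distribs)
      qed
      moreover have "f u - m * (u \<bullet> u) = 0" using nu by (simp add: m_def power2_norm_eq_inner[symmetric])
      ultimately show "(2 * (w \<bullet> Bu)) * t + (f w - m * (w \<bullet> w)) * t^2 \<ge> 0" by simp
    qed
    then show ?thesis using quad_zero by fastforce
  qed
  have "Bu = 0" using a0[OF BuV] by simp
  then have "H *v u = complex_of_real m *s u" by (simp add: Bu_def ofreal_cs)
  then show ?thesis using uV nu by (intro bexI[of _ u]) (auto simp: Eig_def)
qed

lemma cs_decomp: "c *s x = Re c *\<^sub>R x + Im c *\<^sub>R (\<i> *s x)"
proof -
  have c: "c = of_real (Re c) + of_real (Im c) * \<i>" by (simp add: complex_eq_iff)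
  have "c *s x = (of_real (Re c) + of_real (Im c) * \<i>) *s x" using c by (rule arg_cong[where f="\<lambda>z. z *s x"])
  also have "\<dots> = Re c *\<^sub>R x + Im c *\<^sub>R (\<i> *s x)"
    unfolding vec_eq_iff by (simp add: vector_scaleR_component cscaleR ring_distribs)
  finally show ?thesis .
qed

lemma subspace_cs:
  assumes "subspace V" "\<And>v. v \<in> V \<Longrightarrow> \<i> *s v \<in> V" "x \<in> V"
  shows "c *s x \<in> V"
proof -
  have "Re c *\<^sub>R x + Im c *\<^sub>R (\<i> *s x) \<in> V" using assms by (intro subspace_add subspace_scale) auto
  then show ?thesis by (simp only: cs_decomp[symmetric])
qed

lemma eig_span_aux:
  fixes H :: "complex^'n^'n"
  assumes sa: "self_adjoint H"
  shows "subspace V \<Longrightarrow> (\<And>v. v \<in> V \<Longrightarrow> \<i> *s v \<in> V) \<Longrightarrow> (\<And>v. v \<in> V \<Longrightarrow> H *v v \<in> V)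
    \<Longrightarrow> V \<subseteq> span (Eig H)"
proof (induction "dim V" arbitrary: V rule: less_induct)
  case (less V)
  show ?case
  proof (cases "V \<subseteq> {0}")
    case True then show ?thesis using span_zero by auto
  next
    case False
    then obtain x where "x \<in> V" "x \<noteq> 0" by auto
    then obtain u where uV: "u \<in> V" and u0: "u \<noteq> 0" and uE: "u \<in> Eig H"
      using eig_exists[OF sa less(2)] less(4) by blast
    then obtain \<mu> :: real where Hu: "H *v u = complex_of_real \<mu> *s u" by (auto simp: Eig_def)
    define V' where "V' = {v \<in> V. cinner u v = 0}"
    have sV': "subspace V'" unfolding V'_def using less(2)
      by (auto simp: subspace_def cinner_add_right cinner_scaleR_right)
    have iV': "\<i> *s v \<in> V'" if "v \<in> V'" for v
      using that less(3) by (auto simp: V'_def cinner_cscale_right)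
    have HV': "H *v v \<in> V'" if "v \<in> V'" for v
    proof -
      have "cinner u (H *v v) = cinner (H *v u) v" by (rule herm[OF sa])
      also have "\<dots> = 0" using that by (simp add: Hu cinner_cscale_left V'_def)
      finally show ?thesis using that less(4) by (auto simp: V'_def)
    qed
    have uu: "cinner u u \<noteq> 0" using u0 by (simp add: cinner_self)
    have "V' \<subset> V" using uV uu by (auto simp: V'_def)
    moreover have s1: "span V' = V'" using sV' by (simp add: span_eq_iff)
    moreover have s2: "span V = V" using less(2) by (simp add: span_eq_iff)
    ultimately have "dim V' < dim V"
      using dim_psubset[of V' V] by metis
    then have IH: "V' \<subseteq> span (Eig H)" using less(1) sV' iV' HV' by blast
    show ?thesis
    proof
      fix v assume vV: "v \<in> V"
      define c where "c = cinner u v / cinner u u"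
      have "H *v (c *s u) = complex_of_real \<mu> *s (c *s u)"
        unfolding mv_cs Hu by (simp add: vec_eq_iff mult.left_commute)
      then have cu: "c *s u \<in> Eig H" unfolding Eig_def by blast
      have cuV: "c *s u \<in> V" using less(2,3) uV by (rule subspace_cs)
      have "v - c *s u \<in> V" using less(2) vV cuV by (rule subspace_diff)
      moreover have "cinner u (v - c *s u) = 0"
        using uu by (simp add: cinner_diff_right cinner_cscale_right c_def)
      ultimately have "v - c *s u \<in> V'" by (simp add: V'_def)
      then have "v - c *s u \<in> span (Eig H)" using IH by auto
      moreover have "c *s u \<in> span (Eig H)" using cu span_base by blast
      ultimately have "(v - c *s u) + c *s u \<in> span (Eig H)" by (rule span_add)
      then show "v \<in> span (Eig H)" by simp
    qed
  qed
qed

lemma eig_span: "self_adjoint H \<Longrightarrow> span (Eig H) = UNIV"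
  using eig_span_aux[of H UNIV] by auto

lemma eig_induct[consumes 1, case_names zero add scale eig]:
  assumes sa: "self_adjoint H"
    and "P 0" and "\<And>x y. P x \<Longrightarrow> P y \<Longrightarrow> P (x + y)" and "\<And>c x. P x \<Longrightarrow> P (c *\<^sub>R x)"
    and "\<And>v \<mu>. H *v v = complex_of_real \<mu> *s v \<Longrightarrow> P v"
  shows "P x"
proof -
  have "x \<in> span (Eig H)" using eig_span[OF sa] by auto
  then show ?thesis
  proof (rule span_induct)
    show "subspace (Collect P)" using assms by (auto simp: subspace_def)
    show "\<And>x. x \<in> Eig H \<Longrightarrow> P x" using assms(5) by (auto simp: Eig_def)
  qed
qed

lemma eig_orth:
  assumes sa: "self_adjoint H" and "H *v x = complex_of_real \<nu> *s x" and "H *v y = complex_of_real \<mu> *s y"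
    and "\<nu> \<noteq> \<mu>"
  shows "cinner x y = 0"
proof -
  have "complex_of_real \<mu> * cinner x y = cinner x (H *v y)" by (simp add: assms cinner_cscale_right)
  also have "\<dots> = cinner (H *v x) y" by (rule herm[OF sa])
  also have "\<dots> = complex_of_real \<nu> * cinner x y" by (simp add: assms cinner_cscale_left)
  finally show ?thesis using assms(4) by simp
qed

definition Wf :: "(real \<Rightarrow> real) \<Rightarrow> real \<Rightarrow> real \<Rightarrow> complex" where
  "Wf W l t = complex_of_real (W t) * exp (\<i> * complex_of_real (l * t))"
definition Wh :: "(real \<Rightarrow> real) \<Rightarrow> real \<Rightarrow> complex" where
  "Wh W l = (\<integral>t. Wf W l t \<partial>lborel)"

lemma Wf_int:
  assumes "integrable lborel W"
  shows "integrable lborel (Wf W l)"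
proof (rule Bochner_Integration.integrable_bound[OF assms])
  have [measurable]: "W \<in> borel_measurable lborel" using assms by measurable
  show "Wf W l \<in> borel_measurable lborel" unfolding Wf_def by measurable
  show "AE x in lborel. norm (Wf W l x) \<le> norm (W x)"
    by (simp add: Wf_def norm_mult)
qed

lemma W_odd_int:
  fixes W :: "real \<Rightarrow> real"
  assumes "integrable lborel W" "\<And>t. t \<noteq> 0 \<Longrightarrow> W (- t) = - W t"
  shows "(\<integral>t. W t \<partial>lborel) = 0"
proof -
  have [measurable]: "W \<in> borel_measurable lborel" using assms by measurable
  have "(\<integral>t. W t \<partial>lborel) = \<bar>-1\<bar> *\<^sub>R (\<integral>t. W (0 + (-1) * t) \<partial>lborel)"
    by (rule lborel_integral_real_affine) simp
  also have "\<dots> = (\<integral>t. - W t \<partial>lborel)"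
  proof -
    have "(\<integral>t. W (0 + (-1) * t) \<partial>lborel) = (\<integral>t. - W t \<partial>lborel)"
    proof (rule integral_cong_AE)
      show "(\<lambda>t. W (0 + (-1) * t)) \<in> borel_measurable lborel" by measurable
      show "(\<lambda>t. - W t) \<in> borel_measurable lborel" by measurable
      show "AE t in lborel. W (0 + (-1) * t) = - W t"
        using AE_lborel_singleton[of "0::real"] by eventually_elim (simp add: assms(2))
    qed
    then show ?thesis by simp
  qed
  also have "\<dots> = - (\<integral>t. W t \<partial>lborel)" by simp
  finally show ?thesis by simp
qed

lemma Wh_0:
  assumes "filter_function K c0 \<Delta> W"
  shows "Wh W 0 = 0"
proof -
  have "Wh W 0 = (\<integral>t. complex_of_real (W t) \<partial>lborel)" by (simp add: Wh_def Wf_def)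
  also have "\<dots> = 0" using assms W_odd_int[of W] by (simp add: filter_function_def)
  finally show ?thesis .
qed

lemma Wh_gap:
  assumes "filter_function K c0 \<Delta> W" "\<bar>l\<bar> \<ge> \<Delta>"
  shows "Wh W l = \<i> / complex_of_real l"
  using assms unfolding filter_function_def Wh_def Wf_def by blast

lemma Wh_cnj: "cnj (Wh W l) = Wh W (- l)"
proof -
  have "cnj (Wh W l) = (\<integral>t. cnj (Wf W l t) \<partial>lborel)" by (simp add: Wh_def)
  also have "\<dots> = Wh W (- l)" unfolding Wh_def
    by (rule Bochner_Integration.integral_cong) (auto simp: Wf_def exp_cnj)
  finally show ?thesis .
qed

definition Xm :: "complex^'n^'n \<Rightarrow> real \<Rightarrow> complex^'n^'n" where
  "Xm H t = mat_exp (cscale_mat (\<i> * complex_of_real t) H)"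

definition G :: "complex^'n^'n \<Rightarrow> (real \<Rightarrow> real) \<Rightarrow> complex^'n \<Rightarrow> real \<Rightarrow> real \<Rightarrow> complex^'n" where
  "G H W w a t = W t *\<^sub>R (exp (\<i> * complex_of_real (a * t)) *s (Xm H t *v w))"

definition T :: "complex^'n^'n \<Rightarrow> (real \<Rightarrow> real) \<Rightarrow> real \<Rightarrow> complex^'n \<Rightarrow> complex^'n" where
  "T H W a w = (\<integral>t. G H W w a t \<partial>lborel)"

lemma cs_assoc: "a *s (b *s (v::complex^'n)) = (a * b) *s v"
  by (simp add: vec_eq_iff mult.assoc)
lemma scaleR_cs: "r *\<^sub>R (c *s (v::complex^'n)) = (complex_of_real r * c) *s v"
  by (simp add: vec_eq_iff vector_scaleR_component cscaleR mult.assoc)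

lemma G_eig:
  assumes "H *v w = complex_of_real \<mu> *s w"
  shows "G H W w a t = Wf W (a + \<mu>) t *s w"
proof -
  have "Xm H t *v w = exp (\<i> * complex_of_real t * complex_of_real \<mu>) *s w"
    unfolding Xm_def by (rule exp_eig[OF assms])
  moreover have "exp (\<i> * complex_of_real (a * t)) * exp (\<i> * complex_of_real t * complex_of_real \<mu>)
      = exp (\<i> * complex_of_real ((a + \<mu>) * t))"
    by (simp add: exp_add[symmetric] algebra_simps)
  ultimately show ?thesis
    by (simp add: G_def Wf_def cs_assoc scaleR_cs mult.assoc)
qed

lemma G_add: "G H W (x + y) a t = G H W x a t + G H W y a t"
  by (simp add: G_def linear_add[OF lin_mv_right] linear_add[OF lin_cs_right] scaleR_add_right)

lemma G_scale: "G H W (c *\<^sub>R x) a t = c *\<^sub>R G H W x a t"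
  by (simp add: G_def linear_scale[OF lin_mv_right] linear_scale[OF lin_cs_right])

lemma G_int:
  assumes sa: "self_adjoint H" and W: "integrable lborel W"
  shows "integrable lborel (G H W w a)"
proof -
  have "\<forall>a. integrable lborel (G H W w a)"
    using sa
  proof (induction w rule: eig_induct)
    case zero
    then show ?case by (simp add: G_def)
  next
    case (add x y)
    then show ?case by (simp add: G_add[abs_def])
  next
    case (scale c x)
    then show ?case by (simp add: G_scale[abs_def])
  next
    case (eig v \<mu>)
    show ?case
    proof
      fix a
      have "integrable lborel (\<lambda>t. Wf W (a + \<mu>) t *s v)"
        by (rule integrable_bounded_linear[OF bl_cs_left Wf_int[OF W]])
      moreover have "G H W v a = (\<lambda>t. Wf W (a + \<mu>) t *s v)" by (rule ext) (rule G_eig[OF eig])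
      ultimately show "integrable lborel (G H W v a)" by simp
    qed
  qed
  then show ?thesis by blast
qed

lemma T_add: "self_adjoint H \<Longrightarrow> integrable lborel W \<Longrightarrow> T H W a (x + y) = T H W a x + T H W a y"
  unfolding T_def G_add by (simp add: G_int)

lemma T_scale: "T H W a (c *\<^sub>R x) = c *\<^sub>R T H W a x"
  unfolding T_def G_scale by simp

lemma T_diff: "self_adjoint H \<Longrightarrow> integrable lborel W \<Longrightarrow> T H W a (x - y) = T H W a x - T H W a y"
  using T_add[of H W a x "(-1) *\<^sub>R y"] T_scale[of H W a "-1" y] by simp

lemma T_eig:
  assumes W: "integrable lborel W" and "H *v w = complex_of_real \<mu> *s w"
  shows "T H W a w = Wh W (a + \<mu>) *s w"
proof -
  have "T H W a w = (\<integral>t. Wf W (a + \<mu>) t *s w \<partial>lborel)"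
  proof -
    have "G H W w a = (\<lambda>t. Wf W (a + \<mu>) t *s w)" by (rule ext) (rule G_eig[OF assms(2)])
    then show ?thesis unfolding T_def by simp
  qed
  also have "\<dots> = Wh W (a + \<mu>) *s w" unfolding Wh_def
    by (rule integral_bounded_linear[OF bl_cs_left Wf_int[OF W]])
  finally show ?thesis .
qed

lemma T_inner:
  assumes sa: "self_adjoint H" and W: "integrable lborel W" and x: "H *v x = complex_of_real \<nu> *s x"
  shows "cinner x (T H W a w) = Wh W (a + \<nu>) * cinner x w"
  using sa
proof (induction w rule: eig_induct)
  case zero
  then show ?case by (simp add: T_def G_def)
next
  case (add y z)
  then show ?case by (simp add: T_add[OF sa W] cinner_add_right algebra_simps)
next
  case (scale c y)
  then show ?case by (simp add: T_scale cinner_scaleR_right)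
next
  case (eig v \<mu>)
  show ?case
  proof (cases "\<mu> = \<nu>")
    case True
    then show ?thesis by (simp add: T_eig[OF W eig] cinner_cscale_right)
  next
    case False
    then have "cinner x v = 0" using eig_orth[OF sa x eig] by simp
    then show ?thesis by (simp add: T_eig[OF W eig] cinner_cscale_right)
  qed
qed

definition F :: "complex^'n^'n \<Rightarrow> (real \<Rightarrow> real) \<Rightarrow> complex^'n^'n \<Rightarrow> real \<Rightarrow> complex^'n^'n" where
  "F H W A t = W t *\<^sub>R
      (mat_exp (cscale_mat (\<i> * complex_of_real t) H) ** A **
       mat_exp (cscale_mat (- \<i> * complex_of_real t) H))"

lemma S_F: "S_filter W H A = (\<integral>t. F H W A t \<partial>lborel)"
  by (simp add: S_filter_def F_def)

lemma Fv_eig: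
  assumes "H *v v = complex_of_real \<mu> *s v"
  shows "F H W A t *v v = G H W (A *v v) (- \<mu>) t"
proof -
  have Y: "mat_exp (cscale_mat (- \<i> * complex_of_real t) H) *v v
      = exp (\<i> * complex_of_real (- \<mu> * t)) *s v"
    using exp_eig[OF assms, of "- \<i> * complex_of_real t"] by (simp add: algebra_simps)
  have "F H W A t *v v = W t *\<^sub>R ((mat_exp (cscale_mat (\<i> * complex_of_real t) H) ** A **
       mat_exp (cscale_mat (- \<i> * complex_of_real t) H)) *v v)"
    unfolding F_def by (rule linear_scale[OF lin_mv_left])
  also have "\<dots> = W t *\<^sub>R (Xm H t *v (A *v (mat_exp (cscale_mat (- \<i> * complex_of_real t) H) *v v)))"
    by (simp add: matrix_vector_mul_assoc matrix_mul_assoc Xm_def)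
  also have "\<dots> = G H W (A *v v) (- \<mu>) t"
    unfolding Y G_def by (simp add: mv_cs)
  finally show ?thesis .
qed

lemma Fv_add: "F H W A t *v (x + y) = F H W A t *v x + F H W A t *v y"
  by (rule linear_add[OF lin_mv_right])
lemma Fv_scale: "F H W A t *v (c *\<^sub>R x) = c *\<^sub>R (F H W A t *v x)"
  by (rule linear_scale[OF lin_mv_right])

lemma Fv_int:
  assumes sa: "self_adjoint H" and W: "integrable lborel W"
  shows "integrable lborel (\<lambda>t. F H W A t *v v)"
  using sa
proof (induction v rule: eig_induct)
  case zero
  then show ?case by simp
next
  case (add x y)
  then show ?case by (simp add: Fv_add)
next
  case (scale c x)
  then show ?case by (simp add: Fv_scale)
next
  case (eig v \<mu>)
  have "(\<lambda>t. F H W A t *v v) = G H W (A *v v) (- \<mu>)" by (rule ext) (rule Fv_eig[OF eig])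
  then show ?case using G_int[OF sa W] by simp
qed

lemma F_int:
  assumes sa: "self_adjoint H" and W: "integrable lborel W"
  shows "integrable lborel (F H W A)"
proof -
  have "F H W A = (\<lambda>t. \<Sum>j\<in>UNIV. colmat j (F H W A t *v axis j 1))"
    by (rule ext) (rule mat_colmat)
  moreover have "integrable lborel (\<lambda>t. \<Sum>j\<in>UNIV. colmat j (F H W A t *v axis j 1))"
    by (rule Bochner_Integration.integrable_sum) (rule integrable_bounded_linear[OF bl_colmat Fv_int[OF sa W]])
  ultimately show ?thesis by simp
qed

lemma S_apply:
  assumes sa: "self_adjoint H" and W: "integrable lborel W"
  shows "S_filter W H A *v v = (\<integral>t. F H W A t *v v \<partial>lborel)"
  unfolding S_F by (rule integral_bounded_linear[OF bl_mv_left F_int[OF sa W], symmetric])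

lemma S_eig:
  assumes sa: "self_adjoint H" and W: "integrable lborel W" and v: "H *v v = complex_of_real \<mu> *s v"
  shows "S_filter W H A *v v = T H W (- \<mu>) (A *v v)"
proof -
  have "(\<lambda>t. F H W A t *v v) = G H W (A *v v) (- \<mu>)" by (rule ext) (rule Fv_eig[OF v])
  then show ?thesis unfolding S_apply[OF sa W] T_def by simp
qed

lemma S_add: "S *v (x + y) = S *v x + (S::complex^'n^'n) *v y"
  by (rule linear_add[OF lin_mv_right])
lemma S_scale: "S *v (c *\<^sub>R x) = c *\<^sub>R ((S::complex^'n^'n) *v x)"
  by (rule linear_scale[OF lin_mv_right])

lemma S_herm:
  assumes sa: "self_adjoint H" and saA: "self_adjoint A" and W: "integrable lborel W"
  shows "cinner x (S_filter W H A *v y) = cnj (cinner y (S_filter W H A *v x))"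
proof -
  let ?S = "S_filter W H A"
  have eigcase: "cinner x (?S *v y) = cnj (cinner y (?S *v x))"
    if x: "H *v x = complex_of_real \<nu> *s x" and y: "H *v y = complex_of_real \<mu> *s y" for x y \<nu> \<mu>
  proof -
    have "cinner x (?S *v y) = Wh W (- \<mu> + \<nu>) * cinner x (A *v y)"
      unfolding S_eig[OF sa W y] by (rule T_inner[OF sa W x])
    moreover have "cinner y (?S *v x) = Wh W (- \<nu> + \<mu>) * cinner y (A *v x)"
      unfolding S_eig[OF sa W x] by (rule T_inner[OF sa W y])
    moreover have "cnj (cinner y (A *v x)) = cinner x (A *v y)"
      by (simp add: cinner_cnj herm[OF saA])
    moreover have "cnj (Wh W (- \<nu> + \<mu>)) = Wh W (- \<mu> + \<nu>)"
      by (simp add: Wh_cnj)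
    ultimately show ?thesis by simp
  qed
  have yeig: "\<forall>x. cinner x (?S *v y) = cnj (cinner y (?S *v x))" if y: "H *v y = complex_of_real \<mu> *s y" for y \<mu>
  proof
    fix x show "cinner x (?S *v y) = cnj (cinner y (?S *v x))"
      using sa
    proof (induction x rule: eig_induct)
      case zero then show ?case by simp
    next
      case (add a b) then show ?case by (simp add: S_add cinner_add_left cinner_add_right)
    next
      case (scale c a) then show ?case by (simp add: S_scale cinner_scaleR_left cinner_scaleR_right)
    next
      case (eig v \<nu>) then show ?case using eigcase[OF eig y] by simp
    qed
  qed
  have "\<forall>x. cinner x (?S *v y) = cnj (cinner y (?S *v x))"
    using sa
  proof (induction y rule: eig_induct)
    case zero then show ?case by simp
  next
    case (add a b) then show ?case by (simp add: S_add cinner_add_left cinner_add_right)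
  next
    case (scale c a) then show ?case by (simp add: S_scale cinner_scaleR_left cinner_scaleR_right)
  next
    case (eig v \<mu>) then show ?case using yeig by blast
  qed
  then show ?thesis by blast
qed

lemma gs_props:
  fixes H :: "complex^'n^'n"
  assumes gap: "unique_ground_state_gap H E \<Delta>" and gs: "normalized_ground_state H \<psi>" and D: "\<Delta> > 0"
  shows "H *v \<psi> = complex_of_real E *s \<psi>"
    and "cinner \<psi> \<psi> = 1"
    and "\<And>w. H *v w = complex_of_real E *s w \<Longrightarrow> w = cinner \<psi> w *s \<psi>"
    and "\<And>w \<mu>. H *v w = complex_of_real \<mu> *s w \<Longrightarrow> w \<noteq> 0 \<Longrightarrow> \<mu> \<noteq> E \<Longrightarrow> E + \<Delta> \<le> \<mu>"
proof -
  have n1: "norm \<psi> = 1" using gs by (simp add: normalized_ground_state_def cnorm_norm)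
  then have psi0: "\<psi> \<noteq> 0" by auto
  show pp: "cinner \<psi> \<psi> = 1" using n1 by (simp add: cinner_self)
  show gapd: "E + \<Delta> \<le> \<mu>" if "H *v w = complex_of_real \<mu> *s w" "w \<noteq> 0" "\<mu> \<noteq> E" for w \<mu>
  proof -
    have "is_eigenvalue H (complex_of_real \<mu>)" using that unfolding is_eigenvalue_def by blast
    moreover have "complex_of_real \<mu> \<noteq> complex_of_real E" using that(3) by simp
    ultimately show ?thesis using gap unfolding unique_ground_state_gap_def by fastforce
  qed
  obtain E' where E': "H *v \<psi> = complex_of_real E' *s \<psi>"
    and low: "\<And>\<mu>. is_eigenvalue H \<mu> \<Longrightarrow> E' \<le> Re \<mu>"
    using gs unfolding normalized_ground_state_def by blast
  have "E' = E"
  proof (rule ccontr)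
    assume ne: "E' \<noteq> E"
    have "E + \<Delta> \<le> E'" using gapd[OF E' psi0] ne by simp
    moreover have "E' \<le> E" using low gap unfolding unique_ground_state_gap_def by fastforce
    ultimately show False using D by simp
  qed
  then show Hpsi: "H *v \<psi> = complex_of_real E *s \<psi>" using E' by simp
  show "w = cinner \<psi> w *s \<psi>" if w: "H *v w = complex_of_real E *s w" for w
  proof -
    obtain \<phi> where ph: "\<And>v. H *v v = complex_of_real E *s v \<Longrightarrow> \<exists>c. v = c *s \<phi>"
      using gap unfolding unique_ground_state_gap_def by blast
    obtain c1 where c1: "w = c1 *s \<phi>" using ph[OF w] by blast
    obtain c2 where c2: "\<psi> = c2 *s \<phi>" using ph[OF Hpsi] by blast
    have "c2 \<noteq> 0" using psi0 c2 by auto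
    then have w2: "w = (c1 / c2) *s \<psi>" using c1 c2 by (simp add: cs_assoc)
    then have "cinner \<psi> w = c1 / c2" using pp by (simp add: cinner_cscale_right)
    then show ?thesis using w2 by simp
  qed
qed

definition Lop :: "complex^'n^'n \<Rightarrow> real \<Rightarrow> complex^'n \<Rightarrow> complex^'n" where
  "Lop H E w = H *v w - complex_of_real E *s w"

lemma Lop_add: "Lop H E (x + y) = Lop H E x + Lop H E y"
  by (simp add: Lop_def linear_add[OF lin_mv_right] linear_add[OF lin_cs_right])
lemma Lop_scale: "Lop H E (c *\<^sub>R x) = c *\<^sub>R Lop H E x"
  by (simp add: Lop_def linear_scale[OF lin_mv_right] linear_scale[OF lin_cs_right] scaleR_diff_right)

lemma T_main:
  fixes H :: "complex^'n^'n"
  assumes sa: "self_adjoint H" and Wff: "filter_function K c0 \<Delta> W"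
    and Hpsi: "H *v \<psi> = complex_of_real E *s \<psi>"
    and pp: "cinner \<psi> \<psi> = 1"
    and uniq: "\<And>w. H *v w = complex_of_real E *s w \<Longrightarrow> w = cinner \<psi> w *s \<psi>"
    and gapd: "\<And>w \<mu>. H *v w = complex_of_real \<mu> *s w \<Longrightarrow> w \<noteq> 0 \<Longrightarrow> \<mu> \<noteq> E \<Longrightarrow> E + \<Delta> \<le> \<mu>"
  shows "T H W (- E) (Lop H E w) = \<i> *s (w - cinner \<psi> w *s \<psi>)"
  using sa
proof (induction w rule: eig_induct)
  have W: "integrable lborel W" using Wff by (simp add: filter_function_def)
  {
  case zero
  then show ?case by (simp add: Lop_def T_def G_def)
  }
  {
  case (add x y)
  then show ?case
    by (simp add: Lop_add T_add[OF sa W] cinner_add_right linear_add[OF lin_cs_right] algebra_simps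
         vec_eq_iff)
  }
  {
  case (scale c x)
  have "T H W (- E) (Lop H E (c *\<^sub>R x)) = c *\<^sub>R (\<i> *s (x - cinner \<psi> x *s \<psi>))"
    by (simp add: Lop_scale T_scale scale.IH)
  also have "\<dots> = \<i> *s (c *\<^sub>R x - cinner \<psi> (c *\<^sub>R x) *s \<psi>)"
    by (simp add: cinner_scaleR_right vec_eq_iff vector_scaleR_component cscaleR algebra_simps)
  finally show ?case .
  }
  {
  case (eig v \<mu>)
  have Lv: "Lop H E v = (\<mu> - E) *\<^sub>R v" using eig by (simp add: Lop_def ofreal_cs scaleR_diff_left)
  show ?case
  proof (cases "\<mu> = E")
    case True
    then have "v = cinner \<psi> v *s \<psi>" using uniq eig by simp
    then have "v - cinner \<psi> v *s \<psi> = 0" by simp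
    then show ?thesis using Lv True by (simp add: T_def G_def)
  next
    case False
    show ?thesis
    proof (cases "v = 0")
      case True then show ?thesis by (simp add: Lop_def T_def G_def)
    next
      case v0: False
      have "E + \<Delta> \<le> \<mu>" using gapd[OF eig v0 False] .
      then have "\<bar>- E + \<mu>\<bar> \<ge> \<Delta>" by simp
      then have Wh: "Wh W (- E + \<mu>) = \<i> / complex_of_real (- E + \<mu>)" by (rule Wh_gap[OF Wff])
      have o: "cinner \<psi> v = 0" using eig_orth[OF sa Hpsi eig] False by auto
      have ne: "complex_of_real (- E + \<mu>) \<noteq> 0" using False by simp
      have "T H W (- E) (Lop H E v) = (\<mu> - E) *\<^sub>R (Wh W (- E + \<mu>) *s v)"
        unfolding Lv T_scale T_eig[OF W eig] ..
      also have "\<dots> = \<i> *s v" unfolding Wh scaleR_cs using ne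
        by (simp add: field_simps)
      finally show ?thesis using o by simp
    qed
  qed
  }
qed

lemma S_psi:
  fixes H :: "complex^'n^'n"
  assumes sa: "self_adjoint H" and Wff: "filter_function K c0 \<Delta> W"
    and gap: "unique_ground_state_gap H E \<Delta>" and gs: "normalized_ground_state H \<psi>" and D: "\<Delta> > 0"
    and Apsi: "A *v \<psi> = e *s \<psi> - Lop H E \<psi>'"
    and par: "cinner \<psi> \<psi>' = 0"
  shows "cscale_mat \<i> (S_filter W H A) *v \<psi> = \<psi>'"
proof -
  have W: "integrable lborel W" using Wff by (simp add: filter_function_def)
  note g = gs_props[OF gap gs D]
  have ep: "H *v (e *s \<psi>) = complex_of_real E *s (e *s \<psi>)"
    using g(1) by (simp add: mv_cs cs_assoc mult.commute)
  have "S_filter W H A *v \<psi> = T H W (- E) (A *v \<psi>)" by (rule S_eig[OF sa W g(1)])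
  also have "\<dots> = T H W (- E) (e *s \<psi>) - T H W (- E) (Lop H E \<psi>')"
    unfolding Apsi by (rule T_diff[OF sa W])
  also have "T H W (- E) (e *s \<psi>) = 0"
    using T_eig[OF W ep] Wh_0[OF Wff] by simp
  also have "T H W (- E) (Lop H E \<psi>') = \<i> *s \<psi>'"
    using T_main[OF sa Wff g(1) g(2) g(3) g(4)] par by simp
  finally have "S_filter W H A *v \<psi> = - (\<i> *s \<psi>')" by simp
  then show ?thesis by (simp add: cscale_mv vec_eq_iff)
qed

lemma deriv_unique:
  assumes "0 < s" "\<theta> \<in> {0..s}"
    and "(f has_vector_derivative a) (at \<theta> within {0..s})"
    and "(g has_vector_derivative b) (at \<theta> within {0..s})"
    and "\<And>x. x \<in> {0..s} \<Longrightarrow> f x = g x"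
  shows "a = b"
proof -
  have "(f has_vector_derivative b) (at \<theta> within {0..s})"
    by (rule has_vector_derivative_transform_within[OF assms(4) zero_less_one assms(2)]) (simp add: assms(5))
  then show ?thesis
    using vector_derivative_unique_within_closed_interval[of 0 s \<theta> f a b] assms(1-3)
    by (simp add: cbox_interval)
qed

theorem mainTheorem3:
  fixes H H' :: "real \<Rightarrow> complex ^ 'n ^ 'n"
    and \<Psi>0 \<Psi>0' :: "real \<Rightarrow> complex ^ 'n"
    and U :: "real \<Rightarrow> complex ^ 'n ^ 'n"
    and E0 :: "real \<Rightarrow> real"
    and W :: "real \<Rightarrow> real"
    and s \<Delta> K c0 :: real
  assumes s: "s \<ge> 0"
    and \<Delta>: "\<Delta> > 0"
    and W: "filter_function K c0 \<Delta> W"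
    and sa: "\<forall>\<theta>\<in>{0..s}. self_adjoint (H \<theta>)"
    and H_deriv: "\<forall>\<theta>\<in>{0..s}. (H has_vector_derivative H' \<theta>) (at \<theta> within {0..s})"
    and gap: "\<forall>\<theta>\<in>{0..s}. unique_ground_state_gap (H \<theta>) (E0 \<theta>) \<Delta>"
    and gs: "\<forall>\<theta>\<in>{0..s}. normalized_ground_state (H \<theta>) (\<Psi>0 \<theta>)"
    and \<Psi>_deriv: "\<forall>\<theta>\<in>{0..s}. (\<Psi>0 has_vector_derivative \<Psi>0' \<theta>) (at \<theta> within {0..s})"
    and parallel: "\<forall>\<theta>\<in>{0..s}. cinner (\<Psi>0 \<theta>) (\<Psi>0' \<theta>) = 0"
    and U0: "U 0 = mat 1"
    and U_ode: "\<forall>\<theta>\<in>{0..s}. (U has_vector_derivative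
                 (cscale_mat \<i> (S_filter W (H \<theta>) (H' \<theta>)) ** U \<theta>)) (at \<theta> within {0..s})"
  shows "\<forall>\<theta>\<in>{0..s}. \<Psi>0 \<theta> = U \<theta> *v \<Psi>0 0"
proof (cases "s = 0")
  case True
  then show ?thesis using U0 by (simp add: matrix_vector_mul_lid)
next
  case False
  then have s0: "s > 0" using s by simp
  have Wi: "integrable lborel W" using W by (simp add: filter_function_def)
  have saH': "self_adjoint (H' \<theta>)" if th: "\<theta> \<in> {0..s}" for \<theta>
  proof -
    have "((\<lambda>x. adjoint_mat (H x)) has_vector_derivative adjoint_mat (H' \<theta>)) (at \<theta> within {0..s})"
      by (rule bounded_linear.has_vector_derivative[OF bl_adj H_deriv[rule_format, OF th]])
    moreover have "\<And>x. x \<in> {0..s} \<Longrightarrow> adjoint_mat (H x) = H x"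
      using sa by (simp add: self_adjoint_def)
    ultimately have "adjoint_mat (H' \<theta>) = H' \<theta>"
      by (rule deriv_unique[OF s0 th _ H_deriv[rule_format, OF th]])
    then show ?thesis by (simp add: self_adjoint_def)
  qed
  define M where "M \<theta> = cscale_mat \<i> (S_filter W (H \<theta>) (H' \<theta>))" for \<theta>
  have psi_eq: "\<Psi>0' \<theta> = M \<theta> *v \<Psi>0 \<theta>" if th: "\<theta> \<in> {0..s}" for \<theta>
  proof -
    note hH = H_deriv[rule_format, OF th]
    note hP = \<Psi>_deriv[rule_format, OF th]
    define e where "e x = cinner (\<Psi>0 x) (H x *v \<Psi>0 x)" for x
    have Hpd: "((\<lambda>x. H x *v \<Psi>0 x) has_vector_derivative (H \<theta> *v \<Psi>0' \<theta> + H' \<theta> *v \<Psi>0 \<theta>)) (at \<theta> within {0..s})"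
      by (rule bounded_bilinear.has_vector_derivative[OF bbl_mv hH hP])
    define e' where "e' = cinner (\<Psi>0 \<theta>) (H \<theta> *v \<Psi>0' \<theta> + H' \<theta> *v \<Psi>0 \<theta>) + cinner (\<Psi>0' \<theta>) (H \<theta> *v \<Psi>0 \<theta>)"
    have ed: "(e has_vector_derivative e') (at \<theta> within {0..s})"
      unfolding e_def e'_def
      by (rule bounded_bilinear.has_vector_derivative[OF bbl_ci hP Hpd])
    have gd: "((\<lambda>x. e x *s \<Psi>0 x) has_vector_derivative (e \<theta> *s \<Psi>0' \<theta> + e' *s \<Psi>0 \<theta>)) (at \<theta> within {0..s})"
      by (rule bounded_bilinear.has_vector_derivative[OF bbl_cs ed hP])
    have eE: "e x = complex_of_real (E0 x)" and Hx: "H x *v \<Psi>0 x = e x *s \<Psi>0 x" if "x \<in> {0..s}" for x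
    proof -
      note g = gs_props[OF gap[rule_format, OF that] gs[rule_format, OF that] \<Delta>]
      show "e x = complex_of_real (E0 x)" unfolding e_def g(1) by (simp add: cinner_cscale_right g(2))
      then show "H x *v \<Psi>0 x = e x *s \<Psi>0 x" using g(1) by simp
    qed
    have "H \<theta> *v \<Psi>0' \<theta> + H' \<theta> *v \<Psi>0 \<theta> = e \<theta> *s \<Psi>0' \<theta> + e' *s \<Psi>0 \<theta>"
      by (rule deriv_unique[OF s0 th Hpd gd Hx])
    then have "H' \<theta> *v \<Psi>0 \<theta> = e' *s \<Psi>0 \<theta> - Lop (H \<theta>) (E0 \<theta>) (\<Psi>0' \<theta>)"
      unfolding Lop_def eE[OF th, symmetric] by (simp add: algebra_simps)
    from S_psi[OF sa[rule_format, OF th] W gap[rule_format, OF th]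
        gs[rule_format, OF th] \<Delta> this parallel[rule_format, OF th]]
    show ?thesis unfolding M_def by simp
  qed
  define d where "d x = \<Psi>0 x - U x *v \<Psi>0 0" for x
  have dd: "(d has_vector_derivative M \<theta> *v d \<theta>) (at \<theta> within {0..s})" if th: "\<theta> \<in> {0..s}" for \<theta>
  proof -
    have "((\<lambda>x. U x *v \<Psi>0 0) has_vector_derivative ((M \<theta> ** U \<theta>) *v \<Psi>0 0)) (at \<theta> within {0..s})"
    proof -
      have "(U has_vector_derivative M \<theta> ** U \<theta>) (at \<theta> within {0..s})"
        using U_ode[rule_format, OF th] unfolding M_def .
      from bounded_linear.has_vector_derivative[OF bl_mv_left this] show ?thesis .
    qed
    then have "(d has_vector_derivative (\<Psi>0' \<theta> - (M \<theta> ** U \<theta>) *v \<Psi>0 0)) (at \<theta> within {0..s})"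
      unfolding d_def by (intro has_vector_derivative_diff \<Psi>_deriv[rule_format, OF th] \<open>((\<lambda>x. U x *v \<Psi>0 0) has_vector_derivative _) _\<close>)
    moreover have "\<Psi>0' \<theta> - (M \<theta> ** U \<theta>) *v \<Psi>0 0 = M \<theta> *v d \<theta>"
      unfolding psi_eq[OF th] d_def by (simp add: matrix_vector_mul_assoc[symmetric] linear_diff[OF lin_mv_right])
    ultimately show ?thesis by simp
  qed
  have q0: "(d x \<bullet> d x) = 0" if x: "x \<in> {0..s}" for x
  proof -
    have "((\<lambda>x. d x \<bullet> d x) has_real_derivative 0) (at \<theta> within {0..s})" if th: "\<theta> \<in> {0..s}" for \<theta>
    proof -
      have "((\<lambda>x. d x \<bullet> d x) has_vector_derivative (d \<theta> \<bullet> (M \<theta> *v d \<theta>) + (M \<theta> *v d \<theta>) \<bullet> d \<theta>)) (at \<theta> within {0..s})"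
        using bounded_bilinear.has_vector_derivative[OF bounded_bilinear_inner dd[OF th] dd[OF th]] .
      moreover have "d \<theta> \<bullet> (M \<theta> *v d \<theta>) = 0"
      proof -
        let ?z = "cinner (d \<theta>) (S_filter W (H \<theta>) (H' \<theta>) *v d \<theta>)"
        have "?z = cnj ?z"
          by (rule S_herm[OF sa[rule_format, OF th] saH'[OF th] Wi])
        then have "Im ?z = Im (cnj ?z)" by (rule arg_cong)
        then have "Im ?z = 0" by simp
        then show ?thesis unfolding M_def inner_cinner cscale_mv cinner_cscale_right by simp
      qed
      ultimately show ?thesis
        by (simp add: has_real_derivative_iff_has_vector_derivative inner_commute)
    qed
    then obtain c where c: "\<And>x. x \<in> {0..s} \<Longrightarrow> d x \<bullet> d x = c"
      using has_field_derivative_zero_constant[of "{0..s}" "\<lambda>x. d x \<bullet> d x"] by (metis convex_real_interval(5))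
    have "0 \<in> {0..s}" using s by simp
    moreover have "d 0 = 0" unfolding d_def U0 by (simp add: matrix_vector_mul_lid)
    ultimately have "c = 0" using c by force
    then show ?thesis using c x by simp
  qed
  show ?thesis
  proof
    fix \<theta> assume "\<theta> \<in> {0..s}"
    then have "d \<theta> = 0" using q0 by simp
    then show "\<Psi>0 \<theta> = U \<theta> *v \<Psi>0 0" by (simp add: d_def)
  qed
qed

end
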